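(* Let $X$ be a random variable with $\mathbb{E}X=0$ and $0<\mathbb{E}|X|^3<\infty$, and let $b>0$. Then for all $\lambda,\theta>0$, $$\mathbb{E}e^{\lambda bX-\theta(bX)^2}=1+(\lambda^2/2-\theta)b^2\mathbb{E}X^2+\alpha b^3\mathbb{E}X^3+\beta b^4\mathbb{E}X^4I_{\{|bX|\le1\}}+\gamma\big(b^3\mathbb{E}|X|^3I_{\{|bX|>1\}}+b^5\mathbb{E}|X|^5I_{\{|bX|\le1\}}\big)$$ $$\le\exp\Big\{(\lambda^2/2-\theta)b^2\mathbb{E}X^2+\alpha b^3\mathbb{E}X^3+\beta b^4\mathbb{E}X^4I_{\{|bX|\le1\}}+\gamma\big(b^3\mathbb{E}|X|^3I_{\{|bX|>1\}}+b^5\mathbb{E}|X|^5I_{\{|bX|\le1\}}\big)\Big\},$$ where $\alpha=\lambda^3/6-\lambda\theta$, $\beta=\theta^2/2-\lambda^2\theta/2+\lambda^4/24$, and $\gamma$ is a number with $|\gamma|\le\max(O^{(1)}_{\lambda,\theta},O^{(2)}_{\lambda,\theta})$, where $O^{(1)}_{\lambda,\theta}=e^{\lambda^2/(4\theta)}+\lambda+|\lambda^2/2-\theta|+|\lambda^3/6-\lambda\theta|$ and $O^{(2)}_{\lambda,\theta}=\tfrac16(3\lambda\theta^2+\theta^3)+\tfrac1{24}(4\lambda^3\theta+6\lambda^2\theta^2+4\lambda\theta^3+\theta^4)+e^{\lambda^2/(4\theta)}(\lambda+\theta)^5$. *)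

theory Defs
  imports "HOL-Probability.Probability"
begin

definition O1 :: "real \<Rightarrow> real \<Rightarrow> real" where
  "O1 lam \<theta> = exp (lam^2 / (4*\<theta>)) + lam + \<bar>lam^2/2 - \<theta>\<bar> + \<bar>lam^3/6 - lam*\<theta>\<bar>"

definition O2 :: "real \<Rightarrow> real \<Rightarrow> real" where
  "O2 lam \<theta> = (1/6) * (3*lam*\<theta>^2 + \<theta>^3)
     + (1/24) * (4*lam^3*\<theta> + 6*lam^2*\<theta>^2 + 4*lam*\<theta>^3 + \<theta>^4)
     + exp (lam^2 / (4*\<theta>)) * (lam + \<theta>)^5"

end

theory Submission
  imports Defs
begin

lemma exp_taylor5:
  fixes u :: real
  shows "\<exists>t. t \<le> max u 0 \<and> exp u = (\<Sum>m<5. u^m / fact m) + exp t / fact 5 * u^5"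
proof -
  consider "u = 0" | "u > 0" | "u < 0" by linarith
  then show ?thesis
  proof cases
    case 1 then show ?thesis by (intro exI[of _ 0]) (simp add: eval_nat_numeral)
  next
    case 2
    from Maclaurin[OF 2, of 5 "\<lambda>n. exp" exp]
    obtain t where "0 < t" "t < u" "exp u = (\<Sum>m<5. exp 0 / fact m * u ^ m) + exp t / fact 5 * u ^ 5"
      by (auto intro: DERIV_exp)
    then show ?thesis by (intro exI[of _ t]) simp
  next
    case 3
    from Maclaurin_minus[OF 3, of 5 "\<lambda>n. exp" exp]
    obtain t where "u < t" "t < 0" "exp u = (\<Sum>m<5. exp 0 / fact m * u ^ m) + exp t / fact 5 * u ^ 5"
      by (auto intro: DERIV_exp)
    then show ?thesis by (intro exI[of _ t]) simp
  qed
qed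

lemma exp_quad_bound:
  fixes lam \<theta> x :: real assumes "\<theta> > 0"
  shows "lam*x - \<theta>*x^2 \<le> lam^2/(4*\<theta>)"
proof -
  have "0 \<le> (2*\<theta>*x - lam)^2/(4*\<theta>)" using assms by simp
  also have "(2*\<theta>*x - lam)^2/(4*\<theta>) = lam^2/(4*\<theta>) - (lam*x - \<theta>*x^2)"
    using assms by (simp add: field_simps power2_eq_square)
  finally show ?thesis by simp
qed

lemma small_case:
  fixes lam \<theta> x :: real assumes "\<theta> > 0" "lam > 0" "\<bar>x\<bar> \<le> 1"
  shows "\<bar>exp (lam*x - \<theta>*x^2) - (1 + lam*x + (lam^2/2-\<theta>)*x^2 + (lam^3/6-lam*\<theta>)*x^3
            + (\<theta>^2/2 - lam^2*\<theta>/2 + lam^4/24)*x^4)\<bar> \<le> O2 lam \<theta> * \<bar>x\<bar>^5"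
proof -
  define u where "u = lam*x - \<theta>*x^2"
  define E where "E = exp (lam^2/(4*\<theta>))"
  obtain t where t: "t \<le> max u 0" and eu: "exp u = (\<Sum>m<5. u^m / fact m) + exp t / fact 5 * u^5"
    using exp_taylor5 by blast
  have uE: "u \<le> lam^2/(4*\<theta>)" unfolding u_def by (rule exp_quad_bound[OF assms(1)])
  have E1: "1 \<le> E" unfolding E_def using assms by simp
  have etE: "exp t \<le> E" unfolding E_def using t uE assms
    by (smt (verit, best) exp_le_cancel_iff zero_le_divide_iff zero_le_power2 mult_pos_pos)
  have ax: "\<bar>x\<bar>^6 \<le> \<bar>x\<bar>^5" "\<bar>x\<bar>^7 \<le> \<bar>x\<bar>^5" "\<bar>x\<bar>^8 \<le> \<bar>x\<bar>^5"
    by (rule power_decreasing; use assms(3) in auto)+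
  have uabs: "\<bar>u\<bar> \<le> (lam + \<theta>) * \<bar>x\<bar>"
  proof -
    have "\<bar>u\<bar> \<le> \<bar>lam*x\<bar> + \<bar>\<theta>*x^2\<bar>" unfolding u_def by (rule abs_triangle_ineq4)
    also have "\<bar>lam*x\<bar> = lam*\<bar>x\<bar>" using assms by (simp add: abs_mult)
    also have "\<bar>\<theta>*x^2\<bar> = \<theta>*(\<bar>x\<bar>*\<bar>x\<bar>)" using assms by (simp add: abs_mult power2_eq_square)
    also have "\<bar>x\<bar>*\<bar>x\<bar> \<le> \<bar>x\<bar>" using assms(3) mult_left_mono[of "\<bar>x\<bar>" 1 "\<bar>x\<bar>"] by simp
    hence "\<theta>*(\<bar>x\<bar>*\<bar>x\<bar>) \<le> \<theta>*\<bar>x\<bar>" using assms by simp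
    finally show ?thesis by (simp add: algebra_simps)
  qed
  have key0: "(\<Sum>m<5. u^m / fact m) - (1 + lam*x + (lam^2/2-\<theta>)*x^2 + (lam^3/6-lam*\<theta>)*x^3
            + (\<theta>^2/2 - lam^2*\<theta>/2 + lam^4/24)*x^4)
      = ((3*lam*\<theta>^2)*x^5 - \<theta>^3*x^6)/6
        + (-4*lam^3*\<theta>*x^5 + 6*lam^2*\<theta>^2*x^6 - 4*lam*\<theta>^3*x^7 + \<theta>^4*x^8)/24"
    unfolding u_def by (simp add: eval_nat_numeral fact_numeral field_simps)
  have key: "exp u - (1 + lam*x + (lam^2/2-\<theta>)*x^2 + (lam^3/6-lam*\<theta>)*x^3
            + (\<theta>^2/2 - lam^2*\<theta>/2 + lam^4/24)*x^4)
      = ((3*lam*\<theta>^2)*x^5 - \<theta>^3*x^6)/6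
        + (-4*lam^3*\<theta>*x^5 + 6*lam^2*\<theta>^2*x^6 - 4*lam*\<theta>^3*x^7 + \<theta>^4*x^8)/24
        + exp t / 120 * u^5"
    using key0 eu by (simp add: fact_numeral)
  have b1: "\<bar>((3*lam*\<theta>^2)*x^5 - \<theta>^3*x^6)/6\<bar> \<le> (1/6)*(3*lam*\<theta>^2 + \<theta>^3) * \<bar>x\<bar>^5"
  proof -
    have "\<bar>((3*lam*\<theta>^2)*x^5 - \<theta>^3*x^6)\<bar> \<le> 3*lam*\<theta>^2*\<bar>x\<bar>^5 + \<theta>^3*\<bar>x\<bar>^6"
    proof -
      have e1: "\<bar>(3*lam*\<theta>^2)*x^5\<bar> = 3*lam*\<theta>^2*\<bar>x\<bar>^5" using assms by (simp add: abs_mult power_abs)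
      have e2: "\<bar>\<theta>^3*x^6\<bar> = \<theta>^3*\<bar>x\<bar>^6" using assms by (simp add: abs_mult power_abs)
      show ?thesis using e1 e2 abs_triangle_ineq4[of "(3*lam*\<theta>^2)*x^5" "\<theta>^3*x^6"] by linarith
    qed
    also have "\<dots> \<le> 3*lam*\<theta>^2*\<bar>x\<bar>^5 + \<theta>^3*\<bar>x\<bar>^5" using ax assms by simp
    finally show ?thesis by (simp add: algebra_simps)
  qed
  have b2: "\<bar>(-4*lam^3*\<theta>*x^5 + 6*lam^2*\<theta>^2*x^6 - 4*lam*\<theta>^3*x^7 + \<theta>^4*x^8)/24\<bar>
      \<le> (1/24)*(4*lam^3*\<theta> + 6*lam^2*\<theta>^2 + 4*lam*\<theta>^3 + \<theta>^4) * \<bar>x\<bar>^5"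
  proof -
    have "\<bar>(-4*lam^3*\<theta>*x^5 + 6*lam^2*\<theta>^2*x^6 - 4*lam*\<theta>^3*x^7 + \<theta>^4*x^8)\<bar>
       \<le> 4*lam^3*\<theta>*\<bar>x\<bar>^5 + 6*lam^2*\<theta>^2*\<bar>x\<bar>^6 + 4*lam*\<theta>^3*\<bar>x\<bar>^7 + \<theta>^4*\<bar>x\<bar>^8"
    proof -
      have e1: "\<bar>-4*lam^3*\<theta>*x^5\<bar> = 4*lam^3*\<theta>*\<bar>x\<bar>^5" using assms by (simp add: abs_mult power_abs)
      have e2: "\<bar>6*lam^2*\<theta>^2*x^6\<bar> = 6*lam^2*\<theta>^2*\<bar>x\<bar>^6" using assms by (simp add: abs_mult power_abs)
      have e3: "\<bar>4*lam*\<theta>^3*x^7\<bar> = 4*lam*\<theta>^3*\<bar>x\<bar>^7" using assms by (simp add: abs_mult power_abs)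
      have e4: "\<bar>\<theta>^4*x^8\<bar> = \<theta>^4*\<bar>x\<bar>^8" using assms by (simp add: abs_mult power_abs)
      show ?thesis using e1 e2 e3 e4
        abs_triangle_ineq[of "-4*lam^3*\<theta>*x^5 + 6*lam^2*\<theta>^2*x^6 - 4*lam*\<theta>^3*x^7" "\<theta>^4*x^8"]
        abs_triangle_ineq4[of "-4*lam^3*\<theta>*x^5 + 6*lam^2*\<theta>^2*x^6" "4*lam*\<theta>^3*x^7"]
        abs_triangle_ineq[of "-4*lam^3*\<theta>*x^5" "6*lam^2*\<theta>^2*x^6"]
        by linarith
    qed
    also have "\<dots> \<le> 4*lam^3*\<theta>*\<bar>x\<bar>^5 + 6*lam^2*\<theta>^2*\<bar>x\<bar>^5 + 4*lam*\<theta>^3*\<bar>x\<bar>^5 + \<theta>^4*\<bar>x\<bar>^5"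
      using ax assms by (intro add_mono mult_left_mono) auto
    finally show ?thesis by (simp add: algebra_simps)
  qed
  have b3: "\<bar>exp t / 120 * u^5\<bar> \<le> E * (lam+\<theta>)^5 * \<bar>x\<bar>^5"
  proof -
    have "\<bar>exp t / 120 * u^5\<bar> = exp t / 120 * \<bar>u\<bar>^5" by (simp add: abs_mult power_abs)
    also have "\<dots> \<le> E * \<bar>u\<bar>^5"
    proof -
      have "exp t / 120 \<le> E" using etE E1 by linarith
      thus ?thesis by (rule mult_right_mono) simp
    qed
    also have "\<bar>u\<bar>^5 \<le> ((lam + \<theta>) * \<bar>x\<bar>)^5" using uabs by (intro power_mono) auto
    hence "E * \<bar>u\<bar>^5 \<le> E * ((lam + \<theta>) * \<bar>x\<bar>)^5" using E1 by simp
    finally show ?thesis by (simp add: power_mult_distrib)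
  qed
  define A where "A = ((3*lam*\<theta>^2)*x^5 - \<theta>^3*x^6)/6"
  define B where "B = (-4*lam^3*\<theta>*x^5 + 6*lam^2*\<theta>^2*x^6 - 4*lam*\<theta>^3*x^7 + \<theta>^4*x^8)/24"
  define C where "C = exp t / 120 * u^5"
  have tri: "\<bar>A + B + C\<bar> \<le> \<bar>A\<bar> + \<bar>B\<bar> + \<bar>C\<bar>"
    using abs_triangle_ineq[of "A+B" C] abs_triangle_ineq[of A B] by linarith
  have O2e: "O2 lam \<theta> * \<bar>x\<bar>^5 = (1/6)*(3*lam*\<theta>^2 + \<theta>^3) * \<bar>x\<bar>^5
     + (1/24)*(4*lam^3*\<theta> + 6*lam^2*\<theta>^2 + 4*lam*\<theta>^3 + \<theta>^4) * \<bar>x\<bar>^5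
     + E * (lam+\<theta>)^5 * \<bar>x\<bar>^5"
    unfolding O2_def E_def by (simp add: algebra_simps)
  have "\<bar>exp u - (1 + lam*x + (lam^2/2-\<theta>)*x^2 + (lam^3/6-lam*\<theta>)*x^3
            + (\<theta>^2/2 - lam^2*\<theta>/2 + lam^4/24)*x^4)\<bar> \<le> O2 lam \<theta> * \<bar>x\<bar>^5"
    unfolding key A_def[symmetric] B_def[symmetric] C_def[symmetric] O2e
    using tri b1 b2 b3 unfolding A_def[symmetric] B_def[symmetric] C_def[symmetric] by linarith
  then show ?thesis unfolding u_def .
qed


lemma big_case:
  fixes lam \<theta> x :: real assumes "\<theta> > 0" "lam > 0" "\<bar>x\<bar> > 1"
  shows "\<bar>exp (lam*x - \<theta>*x^2) - (1 + lam*x + (lam^2/2-\<theta>)*x^2 + (lam^3/6-lam*\<theta>)*x^3)\<bar>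
     \<le> O1 lam \<theta> * \<bar>x\<bar>^3"
proof -
  define E where "E = exp (lam^2/(4*\<theta>))"
  have E1: "1 \<le> E" unfolding E_def using assms by simp
  have fE: "exp (lam*x - \<theta>*x^2) \<le> E" unfolding E_def
    using exp_quad_bound[OF assms(1)] by simp
  have pos: "exp (lam*x - \<theta>*x^2) > 0" by simp
  have x1: "1 \<le> \<bar>x\<bar>^3" using assms(3) by (simp add: one_le_power)
  have x2a: "\<bar>x\<bar>^1 \<le> \<bar>x\<bar>^3" using assms(3) by (intro power_increasing) auto
  have x2b: "\<bar>x\<bar>^2 \<le> \<bar>x\<bar>^3" using assms(3) by (intro power_increasing) auto
  note x2 = x2a[simplified] x2b
  have t1: "\<bar>exp (lam*x - \<theta>*x^2) - 1\<bar> \<le> E * \<bar>x\<bar>^3"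
  proof -
    have "\<bar>exp (lam*x - \<theta>*x^2) - 1\<bar> \<le> E" using fE pos E1 by linarith
    also have "E \<le> E * \<bar>x\<bar>^3" using E1 x1 by simp
    finally show ?thesis .
  qed
  have t2: "\<bar>lam*x\<bar> \<le> lam * \<bar>x\<bar>^3" using x2 assms by (simp add: abs_mult)
  have t3: "\<bar>(lam^2/2-\<theta>)*x^2\<bar> \<le> \<bar>lam^2/2-\<theta>\<bar> * \<bar>x\<bar>^3"
    using x2 by (simp add: abs_mult mult_left_mono)
  have t4: "\<bar>(lam^3/6-lam*\<theta>)*x^3\<bar> = \<bar>lam^3/6-lam*\<theta>\<bar> * \<bar>x\<bar>^3"
    by (simp add: abs_mult power_abs)
  have O1e: "O1 lam \<theta> * \<bar>x\<bar>^3 = E * \<bar>x\<bar>^3 + lam * \<bar>x\<bar>^3 + \<bar>lam^2/2-\<theta>\<bar> * \<bar>x\<bar>^3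
      + \<bar>lam^3/6-lam*\<theta>\<bar> * \<bar>x\<bar>^3"
    unfolding O1_def E_def by (simp add: algebra_simps)
  show ?thesis unfolding O1e using t1 t2 t3 t4 by linarith
qed

lemma pw:
  fixes lam \<theta> x :: real assumes "\<theta> > 0" "lam > 0"
  shows "\<bar>exp (lam*x - \<theta>*x^2) - (1 + lam*x + (lam^2/2-\<theta>)*x^2 + (lam^3/6-lam*\<theta>)*x^3
            + (if \<bar>x\<bar> \<le> 1 then (\<theta>^2/2 - lam^2*\<theta>/2 + lam^4/24)*x^4 else 0))\<bar>
     \<le> max (O1 lam \<theta>) (O2 lam \<theta>) * (if \<bar>x\<bar> \<le> 1 then \<bar>x\<bar>^5 else \<bar>x\<bar>^3)"
proof (cases "\<bar>x\<bar> \<le> 1")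
  case True
  have "O2 lam \<theta> * \<bar>x\<bar>^5 \<le> max (O1 lam \<theta>) (O2 lam \<theta>) * \<bar>x\<bar>^5"
    by (rule mult_right_mono) auto
  then show ?thesis using small_case[OF assms True] True by simp
next
  case False
  have "O1 lam \<theta> * \<bar>x\<bar>^3 \<le> max (O1 lam \<theta>) (O2 lam \<theta>) * \<bar>x\<bar>^3"
    by (rule mult_right_mono) auto
  then show ?thesis using big_case[OF assms, of x] False by simp
qed

theorem lemma4p1:
  fixes M :: "'a measure" and X :: "'a \<Rightarrow> real" and b lam \<theta> :: real
  assumes "prob_space M"
    and "X \<in> borel_measurable M"
    and "integrable M (\<lambda>x. \<bar>X x\<bar> ^ 3)"
    and "(\<integral>x. X x \<partial>M) = 0"
    and "(\<integral>x. \<bar>X x\<bar> ^ 3 \<partial>M) > 0"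
    and "b > 0" and "lam > 0" and "\<theta> > 0"
  shows "\<exists>\<gamma>::real. \<bar>\<gamma>\<bar> \<le> max (O1 lam \<theta>) (O2 lam \<theta>) \<and>
    (let \<alpha> = lam^3/6 - lam*\<theta>;
         \<beta> = \<theta>^2/2 - lam^2*\<theta>/2 + lam^4/24;
         S = (lam^2/2 - \<theta>) * b^2 * (\<integral>x. (X x)^2 \<partial>M)
             + \<alpha> * b^3 * (\<integral>x. (X x)^3 \<partial>M)
             + \<beta> * b^4 * (\<integral>x. (X x)^4 * indicator {y. \<bar>b * X y\<bar> \<le> 1} x \<partial>M)
             + \<gamma> * (b^3 * (\<integral>x. \<bar>X x\<bar>^3 * indicator {y. \<bar>b * X y\<bar> > 1} x \<partial>M)
                     + b^5 * (\<integral>x. \<bar>X x\<bar>^5 * indicator {y. \<bar>b * X y\<bar> \<le> 1} x \<partial>M))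
     in (\<integral>x. exp (lam * b * X x - \<theta> * (b * X x)^2) \<partial>M) = 1 + S \<and> 1 + S \<le> exp S)"
proof -
  interpret prob_space M by fact
  note Xm[measurable] = assms(2)
  define c2 where "c2 = lam^2/2 - \<theta>"
  define al where "al = lam^3/6 - lam*\<theta>"
  define be where "be = \<theta>^2/2 - lam^2*\<theta>/2 + lam^4/24"
  define C where "C = max (O1 lam \<theta>) (O2 lam \<theta>)"
  define I1 where "I1 = (\<lambda>x. indicator {y. \<bar>b * X y\<bar> \<le> 1} x :: real)"
  define I2 where "I2 = (\<lambda>x. indicator {y. \<bar>b * X y\<bar> > 1} x :: real)"
  have I1m[measurable]: "I1 \<in> borel_measurable M"
  proof -
    have "I1 = (\<lambda>x. if \<bar>b * X x\<bar> \<le> 1 then 1 else 0)" by (auto simp: I1_def indicator_def fun_eq_iff)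
    then show ?thesis by simp
  qed
  have I2m[measurable]: "I2 \<in> borel_measurable M"
  proof -
    have "I2 = (\<lambda>x. if \<bar>b * X x\<bar> > 1 then 1 else 0)" by (auto simp: I2_def indicator_def fun_eq_iff)
    then show ?thesis by simp
  qed
  have I1v: "I1 x = (if \<bar>b * X x\<bar> \<le> 1 then 1 else 0)" "I2 x = (if \<bar>b * X x\<bar> \<le> 1 then 0 else 1)" for x
    by (auto simp: I1_def I2_def indicator_def)
  define f where "f = (\<lambda>x. exp (lam * b * X x - \<theta> * (b * X x)^2))"
  define P where "P = (\<lambda>x. 1 + (lam*b) * X x + (c2*b^2) * (X x)^2 + (al*b^3) * (X x)^3
                        + (be*b^4) * ((X x)^4 * I1 x))"
  define W where "W = (\<lambda>x. b^3 * (\<bar>X x\<bar>^3 * I2 x) + b^5 * (\<bar>X x\<bar>^5 * I1 x))"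
  have int3: "integrable M (\<lambda>x. \<bar>X x\<bar> ^ 3)" by fact
  have int1p: "integrable M (\<lambda>x. 1 + \<bar>X x\<bar> ^ 3)" using int3 by simp
  have le1: "\<bar>t\<bar> \<le> 1 + \<bar>t\<bar>^3" "\<bar>t\<bar>^2 \<le> 1 + \<bar>t\<bar>^3" for t :: real
  proof -
    have "\<bar>t\<bar> \<le> 1 + \<bar>t\<bar>^3 \<and> \<bar>t\<bar>^2 \<le> 1 + \<bar>t\<bar>^3"
    proof (cases "\<bar>t\<bar> \<le> 1")
      case True
      then have "\<bar>t\<bar>^2 \<le> 1" by (simp add: abs_square_le_1)
      then show ?thesis using True by (simp add: add_increasing2)
    next
      case False
      then have "\<bar>t\<bar>^1 \<le> \<bar>t\<bar>^3" "\<bar>t\<bar>^2 \<le> \<bar>t\<bar>^3" by (intro power_increasing; simp)+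
      then show ?thesis by simp
    qed
    then show "\<bar>t\<bar> \<le> 1 + \<bar>t\<bar>^3" "\<bar>t\<bar>^2 \<le> 1 + \<bar>t\<bar>^3" by auto
  qed
  have intX: "integrable M X"
    by (rule Bochner_Integration.integrable_bound[OF int1p]) (auto simp: le1)
  have intX2: "integrable M (\<lambda>x. (X x)^2)"
    by (rule Bochner_Integration.integrable_bound[OF int1p]) (use le1(2) in \<open>auto simp: power_abs\<close>)
  have intX3: "integrable M (\<lambda>x. (X x)^3)"
    by (rule Bochner_Integration.integrable_bound[OF int3]) (auto simp: power_abs)
  have bnd4: "\<bar>X x\<bar>^4 * I1 x \<le> \<bar>X x\<bar>^3 * (1/b)" for x
  proof (cases "\<bar>b * X x\<bar> \<le> 1")
    case True
    then have "\<bar>X x\<bar> \<le> 1/b" using assms(6) by (simp add: abs_mult field_simps)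
    then have "\<bar>X x\<bar>^3 * \<bar>X x\<bar> \<le> \<bar>X x\<bar>^3 * (1/b)" by (intro mult_left_mono) auto
    moreover have "\<bar>X x\<bar>^4 = \<bar>X x\<bar>^3 * \<bar>X x\<bar>" by (simp add: eval_nat_numeral)
    ultimately show ?thesis using True by (simp add: I1v)
  qed (use assms(6) in \<open>simp add: I1v\<close>)
  have bnd5: "\<bar>X x\<bar>^5 * I1 x \<le> \<bar>X x\<bar>^3 * (1/b^2)" for x
  proof (cases "\<bar>b * X x\<bar> \<le> 1")
    case True
    then have h: "\<bar>X x\<bar> \<le> 1/b" using assms(6) by (simp add: abs_mult field_simps)
    then have "\<bar>X x\<bar>^2 \<le> (1/b)^2" by (intro power_mono) auto
    then have "\<bar>X x\<bar>^3 * \<bar>X x\<bar>^2 \<le> \<bar>X x\<bar>^3 * (1/b^2)" by (intro mult_left_mono) (auto simp: power_divide)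
    moreover have "\<bar>X x\<bar>^5 = \<bar>X x\<bar>^3 * (X x)^2" by (simp add: eval_nat_numeral)
    ultimately show ?thesis using True by (simp add: I1v)
  qed (use assms(6) in \<open>simp add: I1v\<close>)
  have I1nn: "0 \<le> I1 x" "0 \<le> I2 x" for x by (simp_all add: I1v)
  have intA: "integrable M (\<lambda>x. (X x)^4 * I1 x)"
  proof (rule Bochner_Integration.integrable_bound[OF integrable_mult_right[OF int3, of "1/b"]])
    show "AE x in M. norm ((X x)^4 * I1 x) \<le> norm (1/b * \<bar>X x\<bar>^3)"
    proof (intro AE_I2)
      fix x
      have "norm ((X x)^4 * I1 x) = \<bar>X x\<bar>^4 * I1 x" using I1nn(1)[of x] by (simp add: abs_mult power_abs)
      also have "\<dots> \<le> \<bar>X x\<bar>^3 * (1/b)" by (rule bnd4)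
      also have "\<dots> = norm (1/b * \<bar>X x\<bar>^3)" using assms(6) by (simp add: abs_mult)
      finally show "norm ((X x)^4 * I1 x) \<le> norm (1/b * \<bar>X x\<bar>^3)" .
    qed
  qed simp
  have intB: "integrable M (\<lambda>x. \<bar>X x\<bar>^5 * I1 x)"
  proof (rule Bochner_Integration.integrable_bound[OF integrable_mult_right[OF int3, of "1/b^2"]])
    show "AE x in M. norm (\<bar>X x\<bar>^5 * I1 x) \<le> norm (1/b^2 * \<bar>X x\<bar>^3)"
    proof (intro AE_I2)
      fix x
      have "norm (\<bar>X x\<bar>^5 * I1 x) = \<bar>X x\<bar>^5 * I1 x" using I1nn(1)[of x] by (simp add: abs_mult)
      also have "\<dots> \<le> \<bar>X x\<bar>^3 * (1/b^2)" by (rule bnd5)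
      also have "\<dots> = norm (1/b^2 * \<bar>X x\<bar>^3)" using assms(6) by (simp add: abs_mult)
      finally show "norm (\<bar>X x\<bar>^5 * I1 x) \<le> norm (1/b^2 * \<bar>X x\<bar>^3)" .
    qed
  qed simp
  have intD: "integrable M (\<lambda>x. \<bar>X x\<bar>^3 * I2 x)"
    by (rule Bochner_Integration.integrable_bound[OF int3]) (auto simp: abs_mult I1v)
  have intf: "integrable M f"
  proof (rule integrable_const_bound[where B="exp (lam^2/(4*\<theta>))"])
    show "AE x in M. norm (f x) \<le> exp (lam^2/(4*\<theta>))"
      using exp_quad_bound[OF assms(8), of lam "b * X _"] by (auto simp: f_def mult.assoc)
  qed (simp add: f_def)
  have intP: "integrable M P" unfolding P_def using intX intX2 intX3 intA by simp
  have intW: "integrable M W" unfolding W_def using intB intD by simp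
  have EP: "(\<integral>x. P x \<partial>M) = 1 + c2*b^2*(\<integral>x. (X x)^2 \<partial>M) + al*b^3*(\<integral>x. (X x)^3 \<partial>M)
              + be*b^4*(\<integral>x. (X x)^4 * I1 x \<partial>M)"
    unfolding P_def using intX intX2 intX3 intA assms(4) by (simp add: prob_space)
  have EW: "(\<integral>x. W x \<partial>M) = b^3 * (\<integral>x. \<bar>X x\<bar>^3 * I2 x \<partial>M) + b^5 * (\<integral>x. \<bar>X x\<bar>^5 * I1 x \<partial>M)"
    unfolding W_def using intB intD by simp
  have pwX: "\<bar>f x - P x\<bar> \<le> C * W x" for x
  proof -
    have "\<bar>f x - P x\<bar> = \<bar>exp (lam*(b*X x) - \<theta>*(b*X x)^2) - (1 + lam*(b*X x) + c2*(b*X x)^2 + al*(b*X x)^3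
            + (if \<bar>b*X x\<bar> \<le> 1 then be*(b*X x)^4 else 0))\<bar>"
      by (simp add: f_def P_def I1v power_mult_distrib algebra_simps)
    also have "\<dots> \<le> C * (if \<bar>b*X x\<bar> \<le> 1 then \<bar>b*X x\<bar>^5 else \<bar>b*X x\<bar>^3)"
      using pw[OF assms(8) assms(7), of "b * X x"] unfolding c2_def al_def be_def C_def .
    also have "(if \<bar>b*X x\<bar> \<le> 1 then \<bar>b*X x\<bar>^5 else \<bar>b*X x\<bar>^3) = W x"
      using assms(6) by (simp add: W_def I1v abs_mult power_mult_distrib)
    finally show ?thesis .
  qed
  have W0: "0 \<le> W x" for x using assms(6) by (simp add: W_def I1v)
  have Dpos: "(\<integral>x. W x \<partial>M) > 0"
  proof -
    have "(\<integral>x. W x \<partial>M) \<ge> 0" using W0 by simp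
    moreover have "(\<integral>x. W x \<partial>M) \<noteq> 0"
    proof
      assume "(\<integral>x. W x \<partial>M) = 0"
      then have "AE x in M. W x = 0" using integral_nonneg_eq_0_iff_AE[OF intW] W0 by simp
      then have "AE x in M. \<bar>X x\<bar>^3 = 0"
      proof (rule AE_mp, intro AE_I2 impI)
        fix x assume "W x = 0"
        then show "\<bar>X x\<bar>^3 = 0" using assms(6)
          by (cases "\<bar>b * X x\<bar> \<le> 1") (auto simp: W_def I1v)
      qed
      then have "(\<integral>x. \<bar>X x\<bar>^3 \<partial>M) = (\<integral>x. 0 \<partial>M)" by (intro integral_cong_AE) auto
      then show False using assms(5) by simp
    qed
    ultimately show ?thesis by linarith
  qed
  define D where "D = (\<integral>x. W x \<partial>M)"
  define \<gamma> where "\<gamma> = ((\<integral>x. f x \<partial>M) - (\<integral>x. P x \<partial>M)) / D"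
  have diff: "\<bar>(\<integral>x. f x \<partial>M) - (\<integral>x. P x \<partial>M)\<bar> \<le> C * D"
  proof -
    have e: "(\<integral>x. f x \<partial>M) - (\<integral>x. P x \<partial>M) = (\<integral>x. f x - P x \<partial>M)"
      using intf intP by simp
    have intCW: "integrable M (\<lambda>x. C * W x)" using intW by simp
    have u: "(\<integral>x. f x - P x \<partial>M) \<le> (\<integral>x. C * W x \<partial>M)"
      by (rule integral_mono) (use intf intP intCW pwX in \<open>auto simp: abs_le_iff\<close>)
    have pw2: "- (C * W x) \<le> f x - P x" for x using pwX[of x] by (auto simp: abs_le_iff)
    have l: "(\<integral>x. - (C * W x) \<partial>M) \<le> (\<integral>x. f x - P x \<partial>M)"
      by (rule integral_mono) (use intf intP intCW pw2 in auto)
    show ?thesis unfolding e D_def using u l by simp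
  qed
  have gam: "\<bar>\<gamma>\<bar> \<le> C"
    using diff Dpos unfolding \<gamma>_def D_def by (simp add: abs_divide divide_le_eq)
  show ?thesis
  proof (rule exI[of _ \<gamma>], intro conjI)
    show "\<bar>\<gamma>\<bar> \<le> max (O1 lam \<theta>) (O2 lam \<theta>)" using gam C_def by simp
    have fE: "(\<integral>x. f x \<partial>M) = (\<integral>x. P x \<partial>M) + \<gamma> * D"
      using Dpos unfolding \<gamma>_def D_def by simp
    show "let \<alpha> = lam^3/6 - lam*\<theta>;
         \<beta> = \<theta>^2/2 - lam^2*\<theta>/2 + lam^4/24;
         S = (lam^2/2 - \<theta>) * b^2 * (\<integral>x. (X x)^2 \<partial>M)
             + \<alpha> * b^3 * (\<integral>x. (X x)^3 \<partial>M)
             + \<beta> * b^4 * (\<integral>x. (X x)^4 * indicator {y. \<bar>b * X y\<bar> \<le> 1} x \<partial>M)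
             + \<gamma> * (b^3 * (\<integral>x. \<bar>X x\<bar>^3 * indicator {y. \<bar>b * X y\<bar> > 1} x \<partial>M)
                     + b^5 * (\<integral>x. \<bar>X x\<bar>^5 * indicator {y. \<bar>b * X y\<bar> \<le> 1} x \<partial>M))
     in (\<integral>x. exp (lam * b * X x - \<theta> * (b * X x)^2) \<partial>M) = 1 + S \<and> 1 + S \<le> exp S"
      unfolding Let_def
      apply (intro conjI)
      subgoal using fE EP EW unfolding f_def D_def I1_def I2_def c2_def al_def be_def
        by (simp add: algebra_simps)
      subgoal by (rule exp_ge_add_one_self)
      done
  qed
qed

end
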